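(* Let $V$ be a finite-dimensional super vector space over a field of characteristic $0$. For a Dirac structure $L\subseteq\mathcal{E}=\mathfrak{gl}(V)\oplus V$, let $W_L=\{x\in V:\ A+x\in L\text{ for some }A\in\mathfrak{gl}(V)\}$ and define $[x,y]_L=A(y)$ for $x,y\in W_L$, where $A$ is any element with $A+x\in L$. Then $[\cdot,\cdot]_L$ is well defined, takes values in $W_L$, and makes $W_L$ a Lie superalgebra; moreover the assignment $L\mapsto(W_L,[\cdot,\cdot]_L)$ is a bijection between the set of Dirac structures of the omni-Lie superalgebra $(\mathcal{E},[\![\cdot,\cdot]\!],\langle\cdot,\cdot\rangle)$ and the set of pairs $(W,[\cdot,\cdot]_W)$ with $W$ a graded subspace of $V$ and $[\cdot,\cdot]_W$ a Lie superalgebra structure on $W$. The inverse sends $(W,[\cdot,\cdot]_W)$ to $\{A+x:\ x\in W,\ A\in\mathfrak{gl}(V),\ A(y)=[x,y]_W\ \forall y\in W\}$.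
   Context: $\mathfrak{gl}(V)$: linear endomorphisms of $V$ with natural $\mathbb{Z}_2$-grading and supercommutator $[A,B]=AB-(-1)^{|A||B|}BA$. $\mathcal{E}=\mathfrak{gl}(V)\oplus V$ graded by $\mathcal{E}_\alpha=\mathfrak{gl}(V)_\alpha\oplus V_\alpha$, homogeneous elements $A+x$ with $|A|=|x|$. Bracket: $[\![A+x,B+y]\!]=[A,B]+\tfrac12(Ay-(-1)^{|x||y|}Bx)$; $V$-valued pairing: $\langle A+x,B+y\rangle=\tfrac12(Ay+(-1)^{|x||y|}Bx)$. $F^\perp=\{e:\langle e,f\rangle=0\ \forall f\in F\}$. A Dirac structure is a graded subspace $L\subseteq\mathcal{E}$ with $L=L^\perp$ and $[\![L,L]\!]\subseteq L$. A Lie superalgebra is a super vector space with bilinear bracket satisfying $[L_\alpha,L_\beta]\subseteq L_{\alpha+\beta}$, $[x,y]=-(-1)^{|x||y|}[y,x]$, and $[x,[y,z]]=[[x,y],z]+(-1)^{|x||y|}[y,[x,z]]$. *)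

theory Defs
  imports Complex_Main
begin

text \<open>Parities are booleans: False = even (0), True = odd (1); addition in Z2 is (\<noteq>).\<close>

definition super_vector_space :: "('k::field \<Rightarrow> 'v::ab_group_add \<Rightarrow> 'v) \<Rightarrow> 'v set \<Rightarrow> 'v set \<Rightarrow> bool" where
  "super_vector_space scale V0 V1 \<longleftrightarrow>
     vector_space scale \<and>
     (\<exists>B. finite B \<and> module.span scale B = UNIV) \<and>
     module.subspace scale V0 \<and> module.subspace scale V1 \<and>
     V0 \<inter> V1 = {0} \<and> (\<forall>x. \<exists>a\<in>V0. \<exists>b\<in>V1. x = a + b)"

definition deg :: "'v set \<Rightarrow> 'v set \<Rightarrow> bool \<Rightarrow> 'v set" where
  "deg V0 V1 \<alpha> = (if \<alpha> then V1 else V0)"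

definition vpart :: "'v::ab_group_add set \<Rightarrow> 'v set \<Rightarrow> bool \<Rightarrow> 'v \<Rightarrow> 'v" where
  "vpart V0 V1 \<alpha> x = (THE y. y \<in> deg V0 V1 \<alpha> \<and> x - y \<in> deg V0 V1 (\<not> \<alpha>))"

definition psign :: "bool \<Rightarrow> bool \<Rightarrow> 'k::field" where
  "psign \<alpha> \<beta> = (if \<alpha> \<and> \<beta> then -1 else 1)"

text \<open>gl(V): linear endomorphisms; degree-alpha part of an endomorphism:
  A_alpha = sum over beta of pi_(alpha+beta) o A o pi_beta.\<close>
definition gl :: "('k::field \<Rightarrow> 'v::ab_group_add \<Rightarrow> 'v) \<Rightarrow> ('v \<Rightarrow> 'v) set" where
  "gl scale = {A. Vector_Spaces.linear scale scale A}"

definition apart :: "'v::ab_group_add set \<Rightarrow> 'v set \<Rightarrow> bool \<Rightarrow> ('v \<Rightarrow> 'v) \<Rightarrow> ('v \<Rightarrow> 'v)" where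
  "apart V0 V1 \<alpha> A = (\<lambda>z. vpart V0 V1 \<alpha> (A (vpart V0 V1 False z))
                        + vpart V0 V1 (\<not> \<alpha>) (A (vpart V0 V1 True z)))"

text \<open>The omni-Lie superalgebra E = gl(V) (+) V: elements are pairs (A, x) standing for A + x.\<close>
type_synonym 'v omni = "('v \<Rightarrow> 'v) \<times> 'v"

definition E :: "('k::field \<Rightarrow> 'v::ab_group_add \<Rightarrow> 'v) \<Rightarrow> 'v omni set" where
  "E scale = {(A, x). A \<in> gl scale}"

definition eadd :: "'v::ab_group_add omni \<Rightarrow> 'v omni \<Rightarrow> 'v omni" where
  "eadd e f = (\<lambda>z. fst e z + fst f z, snd e + snd f)"

definition ezero :: "'v::ab_group_add omni" where
  "ezero = (\<lambda>z. 0, 0)"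

definition escale :: "('k \<Rightarrow> 'v \<Rightarrow> 'v) \<Rightarrow> 'k \<Rightarrow> 'v omni \<Rightarrow> 'v omni" where
  "escale scale c e = (\<lambda>z. scale c (fst e z), scale c (snd e))"

definition epart :: "'v::ab_group_add set \<Rightarrow> 'v set \<Rightarrow> bool \<Rightarrow> 'v omni \<Rightarrow> 'v omni" where
  "epart V0 V1 \<alpha> e = (apart V0 V1 \<alpha> (fst e), vpart V0 V1 \<alpha> (snd e))"

definition hbr :: "('k::field \<Rightarrow> 'v::ab_group_add \<Rightarrow> 'v) \<Rightarrow> bool \<Rightarrow> bool \<Rightarrow> 'v omni \<Rightarrow> 'v omni \<Rightarrow> 'v omni" where
  "hbr scale \<alpha> \<beta> e f =
     (\<lambda>z. fst e (fst f z) - scale (psign \<alpha> \<beta>) (fst f (fst e z)),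
      scale (1/2) (fst e (snd f) - scale (psign \<alpha> \<beta>) (fst f (snd e))))"

definition hpair :: "('k::field \<Rightarrow> 'v::ab_group_add \<Rightarrow> 'v) \<Rightarrow> bool \<Rightarrow> bool \<Rightarrow> 'v omni \<Rightarrow> 'v omni \<Rightarrow> 'v" where
  "hpair scale \<alpha> \<beta> e f = scale (1/2) (fst e (snd f) + scale (psign \<alpha> \<beta>) (fst f (snd e)))"

definition ebr :: "('k::field \<Rightarrow> 'v::ab_group_add \<Rightarrow> 'v) \<Rightarrow> 'v set \<Rightarrow> 'v set \<Rightarrow> 'v omni \<Rightarrow> 'v omni \<Rightarrow> 'v omni" where
  "ebr scale V0 V1 e f =
     eadd (eadd (hbr scale False False (epart V0 V1 False e) (epart V0 V1 False f))
                (hbr scale False True (epart V0 V1 False e) (epart V0 V1 True f)))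
          (eadd (hbr scale True False (epart V0 V1 True e) (epart V0 V1 False f))
                (hbr scale True True (epart V0 V1 True e) (epart V0 V1 True f)))"

definition epair :: "('k::field \<Rightarrow> 'v::ab_group_add \<Rightarrow> 'v) \<Rightarrow> 'v set \<Rightarrow> 'v set \<Rightarrow> 'v omni \<Rightarrow> 'v omni \<Rightarrow> 'v" where
  "epair scale V0 V1 e f =
     hpair scale False False (epart V0 V1 False e) (epart V0 V1 False f)
   + hpair scale False True (epart V0 V1 False e) (epart V0 V1 True f)
   + hpair scale True False (epart V0 V1 True e) (epart V0 V1 False f)
   + hpair scale True True (epart V0 V1 True e) (epart V0 V1 True f)"

definition perp :: "('k::field \<Rightarrow> 'v::ab_group_add \<Rightarrow> 'v) \<Rightarrow> 'v set \<Rightarrow> 'v set \<Rightarrow> 'v omni set \<Rightarrow> 'v omni set" where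
  "perp scale V0 V1 F = {e \<in> E scale. \<forall>f\<in>F. epair scale V0 V1 e f = 0}"

definition graded_subspace_E :: "('k::field \<Rightarrow> 'v::ab_group_add \<Rightarrow> 'v) \<Rightarrow> 'v set \<Rightarrow> 'v set \<Rightarrow> 'v omni set \<Rightarrow> bool" where
  "graded_subspace_E scale V0 V1 L \<longleftrightarrow>
     L \<subseteq> E scale \<and> ezero \<in> L \<and>
     (\<forall>e\<in>L. \<forall>f\<in>L. eadd e f \<in> L) \<and> (\<forall>c. \<forall>e\<in>L. escale scale c e \<in> L) \<and>
     (\<forall>e\<in>L. \<forall>\<alpha>. epart V0 V1 \<alpha> e \<in> L)"

definition dirac :: "('k::field \<Rightarrow> 'v::ab_group_add \<Rightarrow> 'v) \<Rightarrow> 'v set \<Rightarrow> 'v set \<Rightarrow> 'v omni set \<Rightarrow> bool" where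
  "dirac scale V0 V1 L \<longleftrightarrow>
     graded_subspace_E scale V0 V1 L \<and> L = perp scale V0 V1 L \<and>
     (\<forall>e\<in>L. \<forall>f\<in>L. ebr scale V0 V1 e f \<in> L)"

definition graded_subspace_V :: "('k::field \<Rightarrow> 'v::ab_group_add \<Rightarrow> 'v) \<Rightarrow> 'v set \<Rightarrow> 'v set \<Rightarrow> 'v set \<Rightarrow> bool" where
  "graded_subspace_V scale V0 V1 W \<longleftrightarrow>
     module.subspace scale W \<and> (\<forall>x\<in>W. \<forall>\<alpha>. vpart V0 V1 \<alpha> x \<in> W)"

definition lie_superalgebra :: "('k::field \<Rightarrow> 'v::ab_group_add \<Rightarrow> 'v) \<Rightarrow> 'v set \<Rightarrow> 'v set \<Rightarrow> 'v set \<Rightarrow> ('v \<Rightarrow> 'v \<Rightarrow> 'v) \<Rightarrow> bool" where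
  "lie_superalgebra scale V0 V1 W b \<longleftrightarrow>
     graded_subspace_V scale V0 V1 W \<and>
     (\<forall>x\<in>W. \<forall>y\<in>W. b x y \<in> W) \<and>
     (\<forall>x\<in>W. \<forall>x'\<in>W. \<forall>y\<in>W. b (x + x') y = b x y + b x' y \<and> b y (x + x') = b y x + b y x') \<and>
     (\<forall>c. \<forall>x\<in>W. \<forall>y\<in>W. b (scale c x) y = scale c (b x y) \<and> b y (scale c x) = scale c (b y x)) \<and>
     (\<forall>\<alpha> \<beta>. \<forall>x\<in>W \<inter> deg V0 V1 \<alpha>. \<forall>y\<in>W \<inter> deg V0 V1 \<beta>.
        b x y \<in> deg V0 V1 (\<alpha> \<noteq> \<beta>) \<and>
        b x y = - scale (psign \<alpha> \<beta>) (b y x) \<and>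
        (\<forall>z\<in>W. b x (b y z) = b (b x y) z + scale (psign \<alpha> \<beta>) (b y (b x z))))"

text \<open>The set of pairs (W, [,]_W); brackets are normalised to 0 outside W x W so that
  a bracket on W is represented by a unique total function.\<close>
definition lie_pairs :: "('k::field \<Rightarrow> 'v::ab_group_add \<Rightarrow> 'v) \<Rightarrow> 'v set \<Rightarrow> 'v set \<Rightarrow> ('v set \<times> ('v \<Rightarrow> 'v \<Rightarrow> 'v)) set" where
  "lie_pairs scale V0 V1 = {(W, b). lie_superalgebra scale V0 V1 W b \<and>
                               (\<forall>x y. x \<notin> W \<or> y \<notin> W \<longrightarrow> b x y = 0)}"

definition WL :: "'v omni set \<Rightarrow> 'v set" where
  "WL L = {x. \<exists>A. (A, x) \<in> L}"

definition brL :: "'v::zero omni set \<Rightarrow> 'v \<Rightarrow> 'v \<Rightarrow> 'v" where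
  "brL L x y = (if x \<in> WL L \<and> y \<in> WL L then (SOME A. (A, x) \<in> L) y else 0)"

definition dirac_of :: "('k::field \<Rightarrow> 'v::ab_group_add \<Rightarrow> 'v) \<Rightarrow> 'v set \<Rightarrow> ('v \<Rightarrow> 'v \<Rightarrow> 'v) \<Rightarrow> 'v omni set" where
  "dirac_of scale W b = {(A, x). x \<in> W \<and> A \<in> gl scale \<and> (\<forall>y\<in>W. A y = b x y)}"

end

theory Submission imports Defs begin

locale svs =
  fixes scale :: "'k::field_char_0 \<Rightarrow> 'v::ab_group_add \<Rightarrow> 'v" and V0 V1 :: "'v set"
  assumes sv: "super_vector_space scale V0 V1"

sublocale svs \<subseteq> vs: vector_space scale
  using sv unfolding super_vector_space_def by auto

context svs begin

abbreviation "D \<equiv> deg V0 V1"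
abbreviation "P \<equiv> vpart V0 V1"

lemma subV0: "vs.subspace V0" and subV1: "vs.subspace V1" and V01: "V0 \<inter> V1 = {0}"
  and decomp: "\<forall>x. \<exists>a\<in>V0. \<exists>b\<in>V1. x = a + b"
  using sv unfolding super_vector_space_def by auto

lemma subD: "vs.subspace (D a)"
  using subV0 subV1 by (cases a) (auto simp: deg_def)

lemma D0[simp]: "0 \<in> D a" using subD vs.subspace_0 by blast
lemma Dadd: "x \<in> D a \<Longrightarrow> y \<in> D a \<Longrightarrow> x + y \<in> D a" using subD vs.subspace_add by blast
lemma Dscale: "x \<in> D a \<Longrightarrow> scale c x \<in> D a" using subD vs.subspace_scale by blast
lemma Ddiff: "x \<in> D a \<Longrightarrow> y \<in> D a \<Longrightarrow> x - y \<in> D a" using subD vs.subspace_diff by blast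
lemma Dneg: "x \<in> D a \<Longrightarrow> - x \<in> D a" using subD vs.subspace_neg by blast

lemma Dint: "x \<in> D a \<Longrightarrow> x \<in> D (\<not> a) \<Longrightarrow> x = 0"
  using V01 by (cases a) (auto simp: deg_def)

lemma P_unique: "y \<in> D a \<Longrightarrow> x - y \<in> D (\<not> a) \<Longrightarrow> y' \<in> D a \<Longrightarrow> x - y' \<in> D (\<not> a) \<Longrightarrow> y = y'"
proof -
  assume h: "y \<in> D a" "x - y \<in> D (\<not> a)" "y' \<in> D a" "x - y' \<in> D (\<not> a)"
  have "y - y' \<in> D a" using h Ddiff by blast
  moreover have "(x - y') - (x - y) \<in> D (\<not> a)" using h Ddiff by blast
  moreover have "(x - y') - (x - y) = y - y'" by simp
  ultimately have "y - y' = 0" using Dint by metis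
  then show ?thesis by simp
qed

lemma P_exists: "\<exists>y. y \<in> D a \<and> x - y \<in> D (\<not> a)"
proof -
  obtain p q where pq: "p \<in> V0" "q \<in> V1" "x = p + q" using decomp by blast
  show ?thesis
  proof (cases a)
    case True then show ?thesis using pq by (intro exI[of _ q]) (auto simp: deg_def)
  next
    case False then show ?thesis using pq by (intro exI[of _ p]) (auto simp: deg_def)
  qed
qed

lemma P_prop: "P a x \<in> D a \<and> x - P a x \<in> D (\<not> a)"
  unfolding vpart_def using P_exists[of a x] P_unique[of _ a x]
  by - (rule theI', blast)

lemma P_in[simp]: "P a x \<in> D a" using P_prop by blast

lemma P_eq: "y \<in> D a \<Longrightarrow> x - y \<in> D (\<not> a) \<Longrightarrow> P a x = y"
  using P_prop P_unique by blast

lemma P_sum: "P False x + P True x = x"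
proof -
  have "x - P False x \<in> D True" using P_prop[of False x] by simp
  then have "P True x = x - P False x" by (intro P_eq) auto
  then show ?thesis by simp
qed

lemma P_hom: "x \<in> D b \<Longrightarrow> P a x = (if a = b then x else 0)"
  by (rule P_eq) (auto dest: Dint simp: )


lemma P_add: "P a (x + y) = P a x + P a y"
proof (rule P_eq)
  show "P a x + P a y \<in> D a" by (intro Dadd P_in)
  have "x + y - (P a x + P a y) = (x - P a x) + (y - P a y)" by (simp add: algebra_simps)
  then show "x + y - (P a x + P a y) \<in> D (\<not> a)" using P_prop Dadd by metis
qed

lemma P_scale: "P a (scale c x) = scale c (P a x)"
proof (rule P_eq)
  show "scale c (P a x) \<in> D a" by (intro Dscale P_in)
  have "scale c x - scale c (P a x) = scale c (x - P a x)" by (simp add: vs.scale_right_diff_distrib)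
  then show "scale c x - scale c (P a x) \<in> D (\<not> a)" using P_prop Dscale by metis
qed

lemma P_zero[simp]: "P a 0 = 0" using P_hom[OF D0[of False], of a] by simp

lemma P_P: "P a (P b x) = (if a = b then P b x else 0)" using P_hom[OF P_in] .

lemma P_D_self[simp]: "x \<in> D a \<Longrightarrow> P a x = x" by (simp add: P_hom)
lemma P_D_other[simp]: "x \<in> D a \<Longrightarrow> P (\<not> a) x = 0" by (simp add: P_hom)

lemma P_conc[simp]: "x \<in> D True \<Longrightarrow> P False x = 0" "x \<in> D False \<Longrightarrow> P True x = 0"
  "x \<in> D True \<Longrightarrow> P True x = x" "x \<in> D False \<Longrightarrow> P False x = x"
  by (simp_all add: P_hom)

lemma glD: "A \<in> gl scale \<Longrightarrow> A (x + y) = A x + A y"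
  "A \<in> gl scale \<Longrightarrow> A (scale c x) = scale c (A x)"
  unfolding gl_def Vector_Spaces.linear_iff by auto

lemma gl_zero[simp]: "A \<in> gl scale \<Longrightarrow> A 0 = 0"
  using glD(2)[of A 0 0] by simp

lemma gl_diff: "A \<in> gl scale \<Longrightarrow> A (x - y) = A x - A y"
  using glD(1)[of A "x - y" y] by (simp add: algebra_simps)

lemma gl_neg: "A \<in> gl scale \<Longrightarrow> A (- x) = - A x"
  using gl_diff[of A 0 x] by simp

lemma glI: "(\<And>x y. A (x + y) = A x + A y) \<Longrightarrow> (\<And>c x. A (scale c x) = scale c (A x)) \<Longrightarrow> A \<in> gl scale"
  unfolding gl_def Vector_Spaces.linear_iff using vs.vector_space_axioms by auto

lemma gl_comp: "A \<in> gl scale \<Longrightarrow> B \<in> gl scale \<Longrightarrow> (\<lambda>z. A (B z)) \<in> gl scale"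
  by (rule glI) (simp_all add: glD)

lemma gl_add: "A \<in> gl scale \<Longrightarrow> B \<in> gl scale \<Longrightarrow> (\<lambda>z. A z + B z) \<in> gl scale"
  by (rule glI) (simp_all add: glD vs.scale_right_distrib)

lemma gl_sub: "A \<in> gl scale \<Longrightarrow> B \<in> gl scale \<Longrightarrow> (\<lambda>z. A z - B z) \<in> gl scale"
  by (rule glI) (simp_all add: glD vs.scale_right_diff_distrib)

lemma gl_scale: "A \<in> gl scale \<Longrightarrow> (\<lambda>z. scale c (A z)) \<in> gl scale"
  by (rule glI) (simp_all add: glD vs.scale_right_distrib mult.commute)

lemma gl_0: "(\<lambda>z. 0) \<in> gl scale"
  by (rule glI) simp_all

lemma gl_P: "P a \<in> gl scale"
  by (rule glI) (simp_all add: P_add P_scale)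

lemma apart_gl: "A \<in> gl scale \<Longrightarrow> apart V0 V1 a A \<in> gl scale"
  unfolding apart_def
  by (rule glI) (simp_all add: glD P_add P_scale vs.scale_right_distrib algebra_simps)

lemma apart_sum: "A \<in> gl scale \<Longrightarrow> apart V0 V1 False A z + apart V0 V1 True A z = A z"
proof -
  assume A: "A \<in> gl scale"
  have "A z = A (P False z) + A (P True z)" using glD(1)[OF A, of "P False z" "P True z"] P_sum by simp
  also have "\<dots> = (P False (A (P False z)) + P True (A (P False z))) + (P False (A (P True z)) + P True (A (P True z)))"
    by (simp add: P_sum)
  finally show ?thesis unfolding apart_def by (simp add: algebra_simps)
qed

definition hom :: "bool \<Rightarrow> ('v \<Rightarrow> 'v) \<Rightarrow> bool" where
  "hom a A \<longleftrightarrow> (\<forall>b z. z \<in> D b \<longrightarrow> A z \<in> D (a \<noteq> b))"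

lemma apart_hom: "A \<in> gl scale \<Longrightarrow> hom a (apart V0 V1 a A)"
  unfolding hom_def apart_def
proof (intro allI impI)
  fix b z assume A: "A \<in> gl scale" and z: "z \<in> D b"
  show "P a (A (P False z)) + P (\<not> a) (A (P True z)) \<in> D (a \<noteq> b)"
    using z by (cases b; cases a) (simp_all add: P_hom A)
qed

lemma hom_apart_self: assumes A: "A \<in> gl scale" and h: "hom a A"
  shows "apart V0 V1 a A = A" "apart V0 V1 (\<not> a) A = (\<lambda>z. 0)"
proof -
  have h0: "A (P False z) \<in> D a" and h1: "A (P True z) \<in> D (\<not> a)" for z
    using h unfolding hom_def by (metis P_in)+
  show "apart V0 V1 a A = A"
  proof
    fix z
    have "apart V0 V1 a A z = A (P False z) + A (P True z)"
      unfolding apart_def using h0 h1 by simp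
    also have "\<dots> = A z" by (simp add: glD(1)[OF A, symmetric] P_sum)
    finally show "apart V0 V1 a A z = A z" .
  qed
  show "apart V0 V1 (\<not> a) A = (\<lambda>z. 0)"
  proof
    fix z
    show "apart V0 V1 (\<not> a) A z = 0"
      unfolding apart_def using h0[of z] h1[of z] P_D_other[of _ a] P_D_other[of _ "\<not> a"] by simp
  qed
qed

lemma hom_D: "hom a A \<Longrightarrow> z \<in> D b \<Longrightarrow> A z \<in> D (a \<noteq> b)"
  unfolding hom_def by blast

lemma scale_psign: "scale (psign a b) v = (if a \<and> b then - v else v)"
  by (simp add: psign_def vs.scale_minus_left)

lemma psign_sym: "psign a b = psign b a" by (auto simp: psign_def)

lemma half_zero: "scale (1/2) v = 0 \<Longrightarrow> v = 0" by simp

lemma half_double: "scale (1/2) (v + v) = v"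
proof -
  have "v + v = scale 2 v" by (metis one_add_one vs.scale_left_distrib vs.scale_one)
  then show ?thesis by simp
qed


lemma epair_expand:
  "epair scale V0 V1 (B, z) (C, y) = scale (1/2)
     ((apart V0 V1 False B (P False y) + scale (psign False False) (apart V0 V1 False C (P False z)))
    + (apart V0 V1 False B (P True y) + scale (psign False True) (apart V0 V1 True C (P False z)))
    + (apart V0 V1 True B (P False y) + scale (psign True False) (apart V0 V1 False C (P True z)))
    + (apart V0 V1 True B (P True y) + scale (psign True True) (apart V0 V1 True C (P True z))))"
  by (simp add: epair_def epart_def hpair_def vs.scale_right_distrib)

lemma epair_zeroL: assumes B: "B \<in> gl scale" and C: "C \<in> gl scale"
  shows "epair scale V0 V1 (B, 0) (C, y) = scale (1/2) (B y)"
proof -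
  have e: "apart V0 V1 a B y = apart V0 V1 a B (P False y) + apart V0 V1 a B (P True y)" for a
    using glD(1)[OF apart_gl[OF B], of a "P False y" "P True y"] by (simp add: P_sum)
  have "B y = apart V0 V1 False B y + apart V0 V1 True B y" using apart_sum[OF B] by simp
  also have "\<dots> = apart V0 V1 False B (P False y) + apart V0 V1 False B (P True y) +
      (apart V0 V1 True B (P False y) + apart V0 V1 True B (P True y))" using e by simp
  finally have "B y = \<dots>" .
  then show ?thesis unfolding epair_expand using apart_gl[OF C]
    by (simp add: algebra_simps)
qed

lemma epair_homR: assumes B: "B \<in> gl scale" and C: "C \<in> gl scale" and h: "hom b C" and y: "y \<in> D b"
  shows "epair scale V0 V1 (B, z) (C, y) = scale (1/2)
     (B y + scale (psign False b) (C (P False z)) + scale (psign True b) (C (P True z)))"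
proof -
  have s: "B y = apart V0 V1 False B y + apart V0 V1 True B y" using apart_sum[OF B] by simp
  show ?thesis
  proof (cases b)
    case True
    then have "apart V0 V1 True C = C" "apart V0 V1 False C = (\<lambda>z. 0)"
      using hom_apart_self[OF C h] by auto
    then show ?thesis unfolding epair_expand using y True B s apart_gl[OF B]
      by (simp add: algebra_simps)
  next
    case False
    then have "apart V0 V1 False C = C" "apart V0 V1 True C = (\<lambda>z. 0)"
      using hom_apart_self[OF C h] by auto
    then show ?thesis unfolding epair_expand using y False B s apart_gl[OF B]
      by (simp add: algebra_simps)
  qed
qed

lemma epair_hom: assumes B: "B \<in> gl scale" and hB: "hom a B" and z: "z \<in> D a"
  and C: "C \<in> gl scale" and h: "hom b C" and y: "y \<in> D b"
  shows "epair scale V0 V1 (B, z) (C, y) = scale (1/2) (B y + scale (psign a b) (C z))"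
  using epair_homR[OF B C h y, of z] z C by (cases a) simp_all

lemma ebr_hom: assumes A: "A \<in> gl scale" and hA: "hom a A" and x: "x \<in> D a"
  and C: "C \<in> gl scale" and h: "hom b C" and y: "y \<in> D b"
  shows "ebr scale V0 V1 (A, x) (C, y) = hbr scale a b (A, x) (C, y)"
proof -
  have hA': "apart V0 V1 a A = A" "apart V0 V1 (\<not> a) A = (\<lambda>z. 0)" using hom_apart_self[OF A hA] by auto
  have hC': "apart V0 V1 b C = C" "apart V0 V1 (\<not> b) C = (\<lambda>z. 0)" using hom_apart_self[OF C h] by auto
  show ?thesis
    using hA' hC' x y A C
    by (cases a; cases b) (simp_all add: ebr_def epart_def hbr_def eadd_def)
qed


lemma apart_split: "A \<in> gl scale \<Longrightarrow> A y = apart V0 V1 False A (P False y) + apart V0 V1 False A (P True y)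
   + (apart V0 V1 True A (P False y) + apart V0 V1 True A (P True y))"
proof -
  assume A: "A \<in> gl scale"
  have e: "apart V0 V1 a A y = apart V0 V1 a A (P False y) + apart V0 V1 a A (P True y)" for a
    using glD(1)[OF apart_gl[OF A], of a "P False y" "P True y"] by (simp add: P_sum)
  show ?thesis using apart_sum[OF A, of y] e[of False] e[of True] by simp
qed

context
  fixes L assumes dL: "dirac scale V0 V1 L"
begin

lemma Lgl: "(A, x) \<in> L \<Longrightarrow> A \<in> gl scale"
  using dL unfolding dirac_def graded_subspace_E_def E_def by auto

lemma Ladd: "(A, x) \<in> L \<Longrightarrow> (A', x') \<in> L \<Longrightarrow> (\<lambda>z. A z + A' z, x + x') \<in> L"
proof -
  assume a: "(A, x) \<in> L" "(A', x') \<in> L"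
  have "eadd (A, x) (A', x') \<in> L" using dL a unfolding dirac_def graded_subspace_E_def by blast
  then show ?thesis by (simp add: eadd_def)
qed

lemma Lscale: "(A, x) \<in> L \<Longrightarrow> (\<lambda>z. scale c (A z), scale c x) \<in> L"
proof -
  assume a: "(A, x) \<in> L"
  have "escale scale c (A, x) \<in> L" using dL a unfolding dirac_def graded_subspace_E_def by blast
  then show ?thesis by (simp add: escale_def)
qed

lemma Lsub: "(A, x) \<in> L \<Longrightarrow> (A', x') \<in> L \<Longrightarrow> (\<lambda>z. A z - A' z, x - x') \<in> L"
proof -
  assume a: "(A, x) \<in> L" "(A', x') \<in> L"
  have "(\<lambda>z. A z + (\<lambda>z. scale (-1) (A' z)) z, x + scale (-1) x') \<in> L"
    by (rule Ladd[OF a(1) Lscale[OF a(2)]])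
  then show ?thesis by (simp add: vs.scale_minus_left)
qed

lemma Lpart: "(A, x) \<in> L \<Longrightarrow> (apart V0 V1 a A, P a x) \<in> L"
proof -
  assume a: "(A, x) \<in> L"
  have "epart V0 V1 a (A, x) \<in> L" using dL a unfolding dirac_def graded_subspace_E_def by blast
  then show ?thesis by (simp add: epart_def)
qed

lemma Leq: "L = perp scale V0 V1 L" using dL unfolding dirac_def by blast

lemma Liso: "e \<in> L \<Longrightarrow> f \<in> L \<Longrightarrow> epair scale V0 V1 e f = 0"
proof -
  assume a: "e \<in> L" "f \<in> L"
  have "e \<in> perp scale V0 V1 L" using a(1) Leq by blast
  then show ?thesis using a(2) unfolding perp_def by blast
qed

lemma Lbr: "e \<in> L \<Longrightarrow> f \<in> L \<Longrightarrow> ebr scale V0 V1 e f \<in> L"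
  using dL unfolding dirac_def by blast

lemma Lperp: "(A, x) \<in> E scale \<Longrightarrow> (\<And>f. f \<in> L \<Longrightarrow> epair scale V0 V1 (A, x) f = 0) \<Longrightarrow> (A, x) \<in> L"
proof -
  assume a: "(A, x) \<in> E scale" "\<And>f. f \<in> L \<Longrightarrow> epair scale V0 V1 (A, x) f = 0"
  have "(A, x) \<in> perp scale V0 V1 L" unfolding perp_def using a by blast
  then show ?thesis using Leq by blast
qed

lemma Lannih: "(A, 0) \<in> L \<Longrightarrow> (B, y) \<in> L \<Longrightarrow> A y = 0"
  using Liso[of "(A,0)" "(B,y)"] epair_zeroL[of A B y] Lgl by simp

lemma Lwd: "(A, x) \<in> L \<Longrightarrow> (A', x) \<in> L \<Longrightarrow> y \<in> WL L \<Longrightarrow> A y = A' y"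
proof -
  assume a: "(A, x) \<in> L" "(A', x) \<in> L" "y \<in> WL L"
  then obtain B where B: "(B, y) \<in> L" unfolding WL_def by auto
  have "(\<lambda>z. A z - A' z, 0) \<in> L" using Lsub[OF a(1,2)] by simp
  from Lannih[OF this B] show ?thesis by simp
qed

lemma brL_eq: "(A, x) \<in> L \<Longrightarrow> y \<in> WL L \<Longrightarrow> brL L x y = A y"
proof -
  assume a: "(A, x) \<in> L" "y \<in> WL L"
  then have x: "x \<in> WL L" unfolding WL_def by auto
  have "(SOME A. (A, x) \<in> L, x) \<in> L" using someI[of "\<lambda>A. (A, x) \<in> L", OF a(1)] .
  then show ?thesis unfolding brL_def using x a Lwd by auto
qed

lemma WL_part: "x \<in> WL L \<Longrightarrow> P a x \<in> WL L"
  unfolding WL_def using Lpart by blast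

lemma WL_add: "x \<in> WL L \<Longrightarrow> y \<in> WL L \<Longrightarrow> x + y \<in> WL L"
  unfolding WL_def using Ladd by blast

lemma WL_scale: "x \<in> WL L \<Longrightarrow> scale c x \<in> WL L"
  unfolding WL_def using Lscale by blast

lemma WL_0: "0 \<in> WL L"
  using WL_scale[of _ 0] dL unfolding WL_def dirac_def graded_subspace_E_def ezero_def by auto

lemma WL_sub: "vs.subspace (WL L)"
  unfolding vs.subspace_def using WL_0 WL_add WL_scale by blast

lemma Lskew: assumes "(A, x) \<in> L" "hom a A" "x \<in> D a" "(C, y) \<in> L" "hom b C" "y \<in> D b"
  shows "A y = - scale (psign a b) (C x)"
proof -
  have "epair scale V0 V1 (A, x) (C, y) = 0" using assms Liso by blast
  then have "A y + scale (psign a b) (C x) = 0"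
    using epair_hom[of A a x C b y] assms Lgl by simp
  then show ?thesis by (simp add: eq_neg_iff_add_eq_0)
qed

lemma Lhbr: assumes "(A, x) \<in> L" "hom a A" "x \<in> D a" "(C, y) \<in> L" "hom b C" "y \<in> D b"
  shows "(\<lambda>z. A (C z) - scale (psign a b) (C (A z)), A y) \<in> L"
proof -
  have "ebr scale V0 V1 (A, x) (C, y) \<in> L" using assms Lbr by blast
  then have h: "hbr scale a b (A, x) (C, y) \<in> L" using ebr_hom[of A a x C b y] assms Lgl by simp
  have sk: "C x = - scale (psign b a) (A y)" using Lskew[of C y b A x a] assms by simp
  have "scale (psign a b) (C x) = - A y" unfolding sk psign_sym[of b a] by (simp add: scale_psign)
  then have "scale (1/2) (A y - scale (psign a b) (C x)) = A y" using half_double by simp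
  then show ?thesis using h unfolding hbr_def by simp
qed

lemma Lhom_part: "(A, x) \<in> L \<Longrightarrow> hom a (apart V0 V1 a A)"
  using apart_hom Lgl by blast

lemma brL_closed: assumes x: "x \<in> WL L" and y: "y \<in> WL L" shows "brL L x y \<in> WL L"
proof -
  obtain A C where A: "(A, x) \<in> L" and C: "(C, y) \<in> L" using x y unfolding WL_def by auto
  have t: "apart V0 V1 a A (P b y) \<in> WL L" for a b
    using Lhbr[OF Lpart[OF A, of a] Lhom_part[OF A] P_in Lpart[OF C, of b] Lhom_part[OF C] P_in]
    unfolding WL_def by blast
  have "brL L x y = A y" using brL_eq[OF A y] .
  also have "\<dots> = apart V0 V1 False A (P False y) + apart V0 V1 False A (P True y)
   + (apart V0 V1 True A (P False y) + apart V0 V1 True A (P True y))" using apart_split Lgl[OF A] by blast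
  finally show ?thesis using t WL_add by metis
qed

lemma brL_hom: assumes "(A, x) \<in> L" "x \<in> D a" "y \<in> WL L"
  shows "brL L x y = apart V0 V1 a A y"
proof -
  have "(apart V0 V1 a A, x) \<in> L" using Lpart[OF assms(1), of a] assms(2) by simp
  then show ?thesis using brL_eq assms(3) by blast
qed

lemma dirac_lie: "lie_superalgebra scale V0 V1 (WL L) (brL L)"
  unfolding lie_superalgebra_def graded_subspace_V_def
proof (intro conjI ballI allI)
  show "vs.subspace (WL L)" by (rule WL_sub)
  show "P a x \<in> WL L" if "x \<in> WL L" for x a using WL_part that .
  show "brL L x y \<in> WL L" if "x \<in> WL L" "y \<in> WL L" for x y using brL_closed that .
  fix x x' y assume x: "x \<in> WL L" and x': "x' \<in> WL L" and y: "y \<in> WL L"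
  obtain A A' C where A: "(A, x) \<in> L" and A': "(A', x') \<in> L" and C: "(C, y) \<in> L"
    using x x' y unfolding WL_def by auto
  show "brL L (x + x') y = brL L x y + brL L x' y"
    using brL_eq[OF Ladd[OF A A'] y] brL_eq[OF A y] brL_eq[OF A' y] by simp
  show "brL L y (x + x') = brL L y x + brL L y x'"
    using brL_eq[OF C WL_add[OF x x']] brL_eq[OF C x] brL_eq[OF C x'] glD(1)[OF Lgl[OF C]] by simp
next
  fix c x y assume x: "x \<in> WL L" and y: "y \<in> WL L"
  obtain A C where A: "(A, x) \<in> L" and C: "(C, y) \<in> L"
    using x y unfolding WL_def by auto
  show "brL L (scale c x) y = scale c (brL L x y)"
    using brL_eq[OF Lscale[OF A] y] brL_eq[OF A y] by simp
  show "brL L y (scale c x) = scale c (brL L y x)"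
    using brL_eq[OF C WL_scale[OF x]] brL_eq[OF C x] glD(2)[OF Lgl[OF C]] by simp
next
  fix a b x y assume x: "x \<in> WL L \<inter> D a" and y: "y \<in> WL L \<inter> D b"
  obtain A0 C0 where A0: "(A0, x) \<in> L" and C0: "(C0, y) \<in> L"
    using x y unfolding WL_def by auto
  define A where "A = apart V0 V1 a A0"
  define C where "C = apart V0 V1 b C0"
  have A: "(A, x) \<in> L" "hom a A" using Lpart[OF A0, of a] x Lhom_part[OF A0] unfolding A_def by auto
  have C: "(C, y) \<in> L" "hom b C" using Lpart[OF C0, of b] y Lhom_part[OF C0] unfolding C_def by auto
  have bxy: "brL L x y = A y" using brL_eq A y by blast
  have byx: "brL L y x = C x" using brL_eq C x by blast
  show "brL L x y \<in> D (a \<noteq> b)" using bxy hom_D[OF A(2)] y by auto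
  show "brL L x y = - scale (psign a b) (brL L y x)"
    using bxy byx Lskew[OF A(1,2) _ C(1,2)] x y by auto
  {
    fix z assume z: "z \<in> WL L"
    have H: "(\<lambda>z. A (C z) - scale (psign a b) (C (A z)), A y) \<in> L"
      using Lhbr[OF A(1,2) _ C(1,2)] x y by auto
    have "brL L (brL L x y) z = A (C z) - scale (psign a b) (C (A z))"
      using brL_eq[OF H z] bxy by simp
    moreover have "brL L x (brL L y z) = A (C z)"
    proof -
      have yW: "y \<in> WL L" using y by auto
      show ?thesis using brL_eq[OF C(1) z] brL_eq[OF A(1) brL_closed[OF yW z]] by simp
    qed
    moreover have "brL L y (brL L x z) = C (A z)"
    proof -
      have xW: "x \<in> WL L" using x by auto
      show ?thesis using brL_eq[OF A(1) z] brL_eq[OF C(1) brL_closed[OF xW z]] by simp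
    qed
    ultimately have "brL L x (brL L y z) = brL L (brL L x y) z + scale (psign a b) (brL L y (brL L x z))"
      by simp
  }
  then show "brL L x (brL L y z) = brL L (brL L x y) z + scale (psign a b) (brL L y (brL L x z))"
    if "z \<in> WL L" for z using that by blast
qed

lemma dirac_eq: "L = dirac_of scale (WL L) (brL L)"
proof
  show "L \<subseteq> dirac_of scale (WL L) (brL L)"
  proof
    fix e assume e: "e \<in> L"
    obtain A x where ex: "e = (A, x)" by (cases e)
    show "e \<in> dirac_of scale (WL L) (brL L)"
      using e brL_eq Lgl unfolding ex dirac_of_def WL_def by auto
  qed
  show "dirac_of scale (WL L) (brL L) \<subseteq> L"
  proof
    fix e assume e: "e \<in> dirac_of scale (WL L) (brL L)"
    obtain A x where ex: "e = (A, x)" by (cases e)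
    have x: "x \<in> WL L" and Agl: "A \<in> gl scale" and Ay: "\<And>y. y \<in> WL L \<Longrightarrow> A y = brL L x y"
      using e unfolding ex dirac_of_def by auto
    obtain A' where A': "(A', x) \<in> L" using x unfolding WL_def by auto
    have Dgl: "(\<lambda>z. A z - A' z) \<in> gl scale" using gl_sub Agl Lgl[OF A'] by blast
    have "(\<lambda>z. A z - A' z, 0) \<in> L"
    proof (rule Lperp)
      show "((\<lambda>z. A z - A' z), 0) \<in> E scale" using Dgl unfolding E_def by auto
      fix f assume f: "f \<in> L"
      obtain B y where fy: "f = (B, y)" by (cases f)
      have y: "y \<in> WL L" using f unfolding fy WL_def by auto
      have "A y - A' y = 0" using Ay[OF y] brL_eq[OF A' y] by simp
      then show "epair scale V0 V1 (\<lambda>z. A z - A' z, 0) f = 0"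
        unfolding fy using epair_zeroL[OF Dgl Lgl[OF f[unfolded fy]], of y] by simp
    qed
    from Ladd[OF this A'] show "e \<in> L" unfolding ex by simp
  qed
qed

end


lemma ext_lin: assumes W: "vs.subspace W"
  and fadd: "\<And>x y. x \<in> W \<Longrightarrow> y \<in> W \<Longrightarrow> f (x + y) = f x + f y"
  and fsc: "\<And>c x. x \<in> W \<Longrightarrow> f (scale c x) = scale c (f x)"
  shows "\<exists>A\<in>gl scale. \<forall>y\<in>W. A y = f y"
proof -
  interpret vp: vector_space_pair scale scale by unfold_locales
  obtain B where B: "B \<subseteq> W" "vs.independent B" "W \<subseteq> vs.span B" by (rule vs.basis_exists)
  define g where "g = vp.construct B f"
  have g: "g \<in> gl scale" unfolding g_def gl_def using vp.linear_construct[OF B(2)] by simp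
  have f0: "f 0 = 0" using fsc[of 0 0] vs.subspace_0[OF W] by simp
  have "vs.subspace {y \<in> W. g y = f y}"
    unfolding vs.subspace_def
    using vs.subspace_0[OF W] vs.subspace_add[OF W] vs.subspace_scale[OF W] f0 fadd fsc glD[OF g] gl_zero[OF g]
    by auto
  moreover have "B \<subseteq> {y \<in> W. g y = f y}" using B vp.construct_basis[OF B(2)] unfolding g_def by auto
  ultimately have "vs.span B \<subseteq> {y \<in> W. g y = f y}" by (rule vs.span_minimal[rotated])
  then show ?thesis using B(3) g by blast
qed

lemma ext_kill: assumes W: "vs.subspace W" and z: "z \<notin> W"
  shows "\<exists>A\<in>gl scale. (\<forall>y\<in>W. A y = 0) \<and> A z = z"
proof -
  interpret vp: vector_space_pair scale scale by unfold_locales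
  obtain B where B: "B \<subseteq> W" "vs.independent B" "W \<subseteq> vs.span B" by (rule vs.basis_exists)
  have sp: "vs.span B \<subseteq> W" using vs.span_minimal[OF B(1) W] .
  have ind: "vs.independent (insert z B)" using vs.independent_insertI[OF _ B(2)] sp z by blast
  define g where "g = vp.construct (insert z B) (\<lambda>v. if v = z then z else 0)"
  have gl': "Vector_Spaces.linear scale scale g" unfolding g_def using vp.linear_construct[OF ind] by simp
  have g: "g \<in> gl scale" unfolding gl_def using gl' by simp
  have gz: "g z = z" unfolding g_def using vp.construct_basis[OF ind] by simp
  have gB: "g v = 0" if "v \<in> B" for v
    using vp.construct_basis[OF ind, of v] that B(1) z unfolding g_def by auto
  have l0: "Vector_Spaces.linear scale scale (\<lambda>z::'v. 0)" using gl_0 unfolding gl_def by simp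
  have "g y = 0" if "y \<in> W" for y
    using vp.linear_eq_on[OF gl' l0, of y B] gB B(3) that by auto
  then show ?thesis using g gz by blast
qed

context
  fixes W b assumes lp: "lie_superalgebra scale V0 V1 W b"
begin

lemma Wsub: "vs.subspace W" using lp unfolding lie_superalgebra_def graded_subspace_V_def by blast
lemma WP: "x \<in> W \<Longrightarrow> P a x \<in> W" using lp unfolding lie_superalgebra_def graded_subspace_V_def by blast
lemma bW: "x \<in> W \<Longrightarrow> y \<in> W \<Longrightarrow> b x y \<in> W" using lp unfolding lie_superalgebra_def by blast
lemma badd: "x \<in> W \<Longrightarrow> x' \<in> W \<Longrightarrow> y \<in> W \<Longrightarrow> b (x + x') y = b x y + b x' y"
  "x \<in> W \<Longrightarrow> x' \<in> W \<Longrightarrow> y \<in> W \<Longrightarrow> b y (x + x') = b y x + b y x'"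
  using lp unfolding lie_superalgebra_def by blast+
lemma bsc: "x \<in> W \<Longrightarrow> y \<in> W \<Longrightarrow> b (scale c x) y = scale c (b x y)"
  "x \<in> W \<Longrightarrow> y \<in> W \<Longrightarrow> b y (scale c x) = scale c (b y x)"
  using lp unfolding lie_superalgebra_def by blast+
lemma bhom: assumes "x \<in> W" "x \<in> D a" "y \<in> W" "y \<in> D c"
  shows "b x y \<in> D (a \<noteq> c)" "b x y = - scale (psign a c) (b y x)"
    "\<And>z. z \<in> W \<Longrightarrow> b x (b y z) = b (b x y) z + scale (psign a c) (b y (b x z))"
  using lp assms unfolding lie_superalgebra_def by blast+

lemma W0: "0 \<in> W" using vs.subspace_0[OF Wsub] .
lemma Wadd: "x \<in> W \<Longrightarrow> y \<in> W \<Longrightarrow> x + y \<in> W" using vs.subspace_add[OF Wsub] .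
lemma Wscale: "x \<in> W \<Longrightarrow> scale c x \<in> W" using vs.subspace_scale[OF Wsub] .

lemma b0: "y \<in> W \<Longrightarrow> b 0 y = 0" using badd(1)[OF W0 W0, of y] by simp

lemma bsplit: "x \<in> W \<Longrightarrow> y \<in> W \<Longrightarrow> b x y = b (P False x) y + b (P True x) y"
  using badd(1)[OF WP WP, of x x y False True] P_sum by simp

lemma bsplit2: "x \<in> W \<Longrightarrow> y \<in> W \<Longrightarrow> b x y = b x (P False y) + b x (P True y)"
  using badd(2)[OF WP WP, of y y x False True] P_sum by simp

abbreviation "LL \<equiv> dirac_of scale W b"

lemma LL_mem: "(A, x) \<in> LL \<longleftrightarrow> x \<in> W \<and> A \<in> gl scale \<and> (\<forall>y\<in>W. A y = b x y)"
  unfolding dirac_of_def by simp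

lemma LL_R: assumes "(A, x) \<in> LL" "y \<in> W" shows "apart V0 V1 a A y = b (P a x) y"
proof -
  have x: "x \<in> W" and A: "\<And>y. y \<in> W \<Longrightarrow> A y = b x y" using assms LL_mem by auto
  have y: "y \<in> W" by fact
  define x0 x1 y0 y1 where "x0 = P False x" "x1 = P True x" "y0 = P False y" "y1 = P True y"
  have W': "x0 \<in> W" "x1 \<in> W" "y0 \<in> W" "y1 \<in> W" using WP x y unfolding x0_x1_y0_y1_def by auto
  have D': "x0 \<in> D False" "x1 \<in> D True" "y0 \<in> D False" "y1 \<in> D True" unfolding x0_x1_y0_y1_def by auto
  have e0: "A y0 = b x0 y0 + b x1 y0" using A[OF W'(3)] bsplit[OF x W'(3)] unfolding x0_x1_y0_y1_def by simp
  have e1: "A y1 = b x0 y1 + b x1 y1" using A[OF W'(4)] bsplit[OF x W'(4)] unfolding x0_x1_y0_y1_def by simp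
  have d: "b x0 y0 \<in> D False" "b x1 y0 \<in> D True" "b x0 y1 \<in> D True" "b x1 y1 \<in> D False"
    using bhom(1)[OF W'(1) D'(1) W'(3) D'(3)] bhom(1)[OF W'(2) D'(2) W'(3) D'(3)]
      bhom(1)[OF W'(1) D'(1) W'(4) D'(4)] bhom(1)[OF W'(2) D'(2) W'(4) D'(4)] by auto
  have s0: "b x0 y = b x0 y0 + b x0 y1" using bsplit2[OF W'(1) y] unfolding x0_x1_y0_y1_def by simp
  have s1: "b x1 y = b x1 y0 + b x1 y1" using bsplit2[OF W'(2) y] unfolding x0_x1_y0_y1_def by simp
  show ?thesis
  proof (cases a)
    case True
    then show ?thesis unfolding apart_def x0_x1_y0_y1_def[symmetric] e0 e1 using d s1
      by (simp add: P_add x0_x1_y0_y1_def[symmetric])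
  next
    case False
    then show ?thesis unfolding apart_def x0_x1_y0_y1_def[symmetric] e0 e1 using d s0
      by (simp add: P_add x0_x1_y0_y1_def[symmetric])
  qed
qed


lemma LL_zero: "(\<lambda>z. 0, 0) \<in> LL"
  using LL_mem W0 gl_0 b0 by auto

lemma LL_add: "(A, x) \<in> LL \<Longrightarrow> (A', x') \<in> LL \<Longrightarrow> (\<lambda>z. A z + A' z, x + x') \<in> LL"
  unfolding LL_mem using Wadd gl_add badd(1) by auto

lemma LL_scale: "(A, x) \<in> LL \<Longrightarrow> (\<lambda>z. scale c (A z), scale c x) \<in> LL"
  unfolding LL_mem using Wscale gl_scale bsc(1) by auto

lemma LL_part: "(A, x) \<in> LL \<Longrightarrow> (apart V0 V1 a A, P a x) \<in> LL"
  using LL_R[of A x _ a] LL_mem[of A x] LL_mem[of "apart V0 V1 a A" "P a x"] WP apart_gl by auto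

lemma LL_hbr: assumes A: "(A, x) \<in> LL" and x: "x \<in> D a" and C: "(C, y) \<in> LL" and y: "y \<in> D c"
  shows "hbr scale a c (A, x) (C, y) \<in> LL"
proof -
  have xW: "x \<in> W" and Ag: "A \<in> gl scale" and Ab: "\<And>w. w \<in> W \<Longrightarrow> A w = b x w" using A LL_mem by auto
  have yW: "y \<in> W" and Cg: "C \<in> gl scale" and Cb: "\<And>w. w \<in> W \<Longrightarrow> C w = b y w" using C LL_mem by auto
  have sk: "b y x = - scale (psign c a) (b x y)" using bhom(2)[OF yW y xW x] .
  have "scale (psign a c) (C x) = - b x y" unfolding Cb[OF xW] sk psign_sym[of c a] by (simp add: scale_psign)
  then have v: "scale (1/2) (A y - scale (psign a c) (C x)) = b x y" using half_double Ab[OF yW] by simp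
  have g: "(\<lambda>z. A (C z) - scale (psign a c) (C (A z))) \<in> gl scale"
    using gl_sub[OF gl_comp[OF Ag Cg] gl_scale[OF gl_comp[OF Cg Ag]]] by simp
  have "A (C w) - scale (psign a c) (C (A w)) = b (b x y) w" if w: "w \<in> W" for w
    using Ab[OF bW[OF yW w]] Cb[OF bW[OF xW w]] Cb[OF w] Ab[OF w] bhom(3)[OF xW x yW y w] by simp
  then show ?thesis unfolding hbr_def using v g bW[OF xW yW] LL_mem by simp
qed

lemma LL_ebr: assumes e: "e \<in> LL" and f: "f \<in> LL" shows "ebr scale V0 V1 e f \<in> LL"
proof -
  obtain A x where ex: "e = (A, x)" by (cases e)
  obtain C y where fy: "f = (C, y)" by (cases f)
  have h: "hbr scale a c (epart V0 V1 a e) (epart V0 V1 c f) \<in> LL" for a c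
    using LL_hbr[OF LL_part[of A x a] P_in LL_part[of C y c] P_in] e f unfolding ex fy epart_def by simp
  have ad: "u \<in> LL \<Longrightarrow> v \<in> LL \<Longrightarrow> eadd u v \<in> LL" for u v
    using LL_add[of "fst u" "snd u" "fst v" "snd v"] unfolding eadd_def by simp
  show ?thesis unfolding ebr_def by (intro ad h)
qed

lemma LL_iso: assumes e: "(B, z) \<in> LL" and f: "(C, y) \<in> LL" shows "epair scale V0 V1 (B, z) (C, y) = 0"
proof -
  have zW: "z \<in> W" and yW: "y \<in> W" using e f LL_mem by auto
  have t: "apart V0 V1 a B (P c y) + scale (psign a c) (apart V0 V1 c C (P a z)) = 0" for a c
  proof -
    have 1: "apart V0 V1 a B (P c y) = b (P a z) (P c y)" using LL_R[OF e WP[OF yW]] .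
    have 2: "apart V0 V1 c C (P a z) = b (P c y) (P a z)" using LL_R[OF f WP[OF zW]] .
    have 3: "b (P c y) (P a z) = - scale (psign c a) (b (P a z) (P c y))"
      using bhom(2)[OF WP[OF yW] P_in WP[OF zW] P_in] .
    show ?thesis unfolding 1 2 3 psign_sym[of c a] by (simp add: scale_psign)
  qed
  show ?thesis unfolding epair_expand using t[of False False] t[of False True] t[of True False] t[of True True]
    by simp
qed

lemma LL_perp: assumes e: "(B, z) \<in> perp scale V0 V1 LL" shows "(B, z) \<in> LL"
proof -
  have Bg: "B \<in> gl scale" and orth: "\<And>f. f \<in> LL \<Longrightarrow> epair scale V0 V1 (B, z) f = 0"
    using e unfolding perp_def E_def by auto
  have zP: "P a z \<in> W" for a
  proof (rule ccontr)
    assume nW: "P a z \<notin> W"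
    obtain A' where A': "A' \<in> gl scale" "\<And>y. y \<in> W \<Longrightarrow> A' y = 0" "A' (P a z) = P a z"
      using ext_kill[OF Wsub nW] by blast
    define A where "A = (\<lambda>v. P a (A' (P a v)))"
    have Ag: "A \<in> gl scale" unfolding A_def using gl_comp[OF gl_P gl_comp[OF A'(1) gl_P]] .
    have hA: "hom False A" unfolding hom_def
    proof (intro allI impI)
      fix c v assume v: "v \<in> D c"
      show "A v \<in> D (False \<noteq> c)"
      proof (cases "a = c")
        case True then show ?thesis unfolding A_def using P_in[of a] by auto
      next
        case False then show ?thesis unfolding A_def using v A'(1) by (simp add: P_hom)
      qed
    qed
    have "(A, 0) \<in> LL" unfolding LL_mem using W0 Ag A'(2) WP b0 unfolding A_def by simp
    then have "epair scale V0 V1 (B, z) (A, 0) = 0" by (rule orth)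
    then have "A (P False z) + A (P True z) = 0"
      using epair_homR[OF Bg Ag hA D0, of z] Bg by (simp add: scale_psign psign_def)
    moreover have "A (P False z) + A (P True z) = P a z"
      using A' by (cases a) (simp_all add: A_def P_P)
    ultimately have "P a z = 0" by simp
    then show False using nW W0 by simp
  qed
  have zW: "z \<in> W" using Wadd[OF zP zP, of False True] P_sum by simp
  have hy: "B y = b z y" if yW: "y \<in> W" and yD: "y \<in> D c" for y c
  proof -
    obtain C0 where C0: "C0 \<in> gl scale" "\<And>w. w \<in> W \<Longrightarrow> C0 w = b y w"
      using ext_lin[OF Wsub, of "b y"] badd(2)[OF _ _ yW] bsc(2)[OF _ yW] by blast
    have "(C0, y) \<in> LL" using LL_mem C0 yW by auto
    from LL_part[OF this, of c] have Cm: "(apart V0 V1 c C0, y) \<in> LL" using yD by simp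
    define C where "C = apart V0 V1 c C0"
    have Cg: "C \<in> gl scale" and hC: "hom c C" unfolding C_def using apart_gl apart_hom C0 by auto
    have Cb: "\<And>w. w \<in> W \<Longrightarrow> C w = b y w" using Cm LL_mem unfolding C_def by auto
    have t: "scale (psign d c) (C (P d z)) = - b (P d z) y" for d
    proof -
      have "b y (P d z) = - scale (psign c d) (b (P d z) y)" using bhom(2)[OF yW yD zP P_in] .
      then show ?thesis unfolding Cb[OF zP] psign_sym[of c d] by (simp add: scale_psign)
    qed
    have "epair scale V0 V1 (B, z) (C, y) = 0" using orth Cm unfolding C_def by blast
    then have "B y + scale (psign False c) (C (P False z)) + scale (psign True c) (C (P True z)) = 0"
      using epair_homR[OF Bg Cg hC yD, of z] by simp
    then have "B y - b (P False z) y - b (P True z) y = 0" using t[of False] t[of True] by simp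
    then show ?thesis using bsplit[OF zW yW] by (simp add: algebra_simps)
  qed
  have "B y = b z y" if yW: "y \<in> W" for y
  proof -
    have "B y = B (P False y) + B (P True y)" using glD(1)[OF Bg] P_sum by metis
    also have "\<dots> = b z (P False y) + b z (P True y)" using hy[OF WP[OF yW] P_in] by simp
    also have "\<dots> = b z y" using bsplit2[OF zW yW] by simp
    finally show ?thesis .
  qed
  then show ?thesis unfolding LL_mem using zW Bg by blast
qed

lemma LL_dirac: "dirac scale V0 V1 LL"
  unfolding dirac_def graded_subspace_E_def
proof (intro conjI ballI allI)
  show "LL \<subseteq> E scale" unfolding dirac_of_def E_def by auto
  show "ezero \<in> LL" unfolding ezero_def by (rule LL_zero)
  show "eadd e f \<in> LL" if "e \<in> LL" "f \<in> LL" for e f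
    using LL_add[of "fst e" "snd e" "fst f" "snd f"] that unfolding eadd_def by simp
  show "escale scale c e \<in> LL" if "e \<in> LL" for c e
    using LL_scale[of "fst e" "snd e" c] that unfolding escale_def by simp
  show "epart V0 V1 a e \<in> LL" if "e \<in> LL" for a e
    using LL_part[of "fst e" "snd e" a] that unfolding epart_def by simp
  show "ebr scale V0 V1 e f \<in> LL" if "e \<in> LL" "f \<in> LL" for e f using LL_ebr that .
  show "LL = perp scale V0 V1 LL"
  proof
    show "LL \<subseteq> perp scale V0 V1 LL"
    proof
      fix e assume e: "e \<in> LL"
      obtain B z where ez: "e = (B, z)" by (cases e)
      show "e \<in> perp scale V0 V1 LL" unfolding perp_def
      proof (intro CollectI conjI ballI)
        show "e \<in> E scale" using e unfolding ez dirac_of_def E_def by auto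
        fix f assume f: "f \<in> LL"
        obtain C y where fy: "f = (C, y)" by (cases f)
        show "epair scale V0 V1 e f = 0" using LL_iso e f unfolding ez fy by blast
      qed
    qed
    show "perp scale V0 V1 LL \<subseteq> LL"
    proof
      fix e assume e: "e \<in> perp scale V0 V1 LL"
      obtain B z where ez: "e = (B, z)" by (cases e)
      show "e \<in> LL" using LL_perp e unfolding ez by blast
    qed
  qed
qed

lemma LL_WL: "WL LL = W"
proof
  show "WL LL \<subseteq> W" unfolding WL_def dirac_of_def by auto
  show "W \<subseteq> WL LL"
  proof
    fix x assume x: "x \<in> W"
    obtain A where "A \<in> gl scale" "\<And>w. w \<in> W \<Longrightarrow> A w = b x w"
      using ext_lin[OF Wsub, of "b x"] badd(2)[OF _ _ x] bsc(2)[OF _ x] by blast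
    then have "(A, x) \<in> LL" using LL_mem x by auto
    then show "x \<in> WL LL" unfolding WL_def by auto
  qed
qed


lemma LL_brL: assumes bz: "\<forall>x y. x \<notin> W \<or> y \<notin> W \<longrightarrow> b x y = 0" shows "brL LL = b"
proof (intro ext)
  fix x y
  show "brL LL x y = b x y"
  proof (cases "x \<in> W \<and> y \<in> W")
    case True
    then have "x \<in> WL LL" using LL_WL by simp
    then obtain A where "(A, x) \<in> LL" unfolding WL_def by auto
    then have "(SOME A. (A, x) \<in> LL, x) \<in> LL" using someI[of "\<lambda>A. (A, x) \<in> LL"] by blast
    then show ?thesis using True LL_WL LL_mem unfolding brL_def by auto
  next
    case False
    then show ?thesis using bz LL_WL unfolding brL_def by auto
  qed
qed

end

end

theorem mainTheorem6:
  fixes scale :: "'k::field_char_0 \<Rightarrow> 'v::ab_group_add \<Rightarrow> 'v"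
    and V0 V1 :: "'v set"
  assumes "super_vector_space scale V0 V1"
  shows "(\<forall>L. dirac scale V0 V1 L \<longrightarrow>
            (\<forall>x\<in>WL L. \<forall>A A'. (A, x) \<in> L \<and> (A', x) \<in> L \<longrightarrow> (\<forall>y\<in>WL L. A y = A' y)) \<and>
            (\<forall>x\<in>WL L. \<forall>y\<in>WL L. brL L x y \<in> WL L) \<and>
            lie_superalgebra scale V0 V1 (WL L) (brL L))
       \<and> bij_betw (\<lambda>L. (WL L, brL L)) {L. dirac scale V0 V1 L} (lie_pairs scale V0 V1)
       \<and> (\<forall>W b. (W, b) \<in> lie_pairs scale V0 V1 \<longrightarrow>
            dirac scale V0 V1 (dirac_of scale W b) \<and>
            (WL (dirac_of scale W b), brL (dirac_of scale W b)) = (W, b))"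
proof -
  interpret svs scale V0 V1 by (rule svs.intro) (rule assms)
  have P1: "\<forall>L. dirac scale V0 V1 L \<longrightarrow>
            (\<forall>x\<in>WL L. \<forall>A A'. (A, x) \<in> L \<and> (A', x) \<in> L \<longrightarrow> (\<forall>y\<in>WL L. A y = A' y)) \<and>
            (\<forall>x\<in>WL L. \<forall>y\<in>WL L. brL L x y \<in> WL L) \<and>
            lie_superalgebra scale V0 V1 (WL L) (brL L)"
    using Lwd brL_closed dirac_lie by blast
  have P3: "\<forall>W b. (W, b) \<in> lie_pairs scale V0 V1 \<longrightarrow>
            dirac scale V0 V1 (dirac_of scale W b) \<and>
            (WL (dirac_of scale W b), brL (dirac_of scale W b)) = (W, b)"
    unfolding lie_pairs_def using LL_dirac LL_WL LL_brL by auto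
  have P2: "bij_betw (\<lambda>L. (WL L, brL L)) {L. dirac scale V0 V1 L} (lie_pairs scale V0 V1)"
    unfolding bij_betw_def
  proof
    show "inj_on (\<lambda>L. (WL L, brL L)) {L. dirac scale V0 V1 L}"
    proof (rule inj_onI)
      fix L L' assume "L \<in> {L. dirac scale V0 V1 L}" "L' \<in> {L. dirac scale V0 V1 L}"
        "(WL L, brL L) = (WL L', brL L')"
      then show "L = L'" using dirac_eq[of L] dirac_eq[of L'] by auto
    qed
    show "(\<lambda>L. (WL L, brL L)) ` {L. dirac scale V0 V1 L} = lie_pairs scale V0 V1"
    proof
      show "(\<lambda>L. (WL L, brL L)) ` {L. dirac scale V0 V1 L} \<subseteq> lie_pairs scale V0 V1"
        unfolding lie_pairs_def using P1 by (auto simp: brL_def)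
      show "lie_pairs scale V0 V1 \<subseteq> (\<lambda>L. (WL L, brL L)) ` {L. dirac scale V0 V1 L}"
      proof
        fix p assume p: "p \<in> lie_pairs scale V0 V1"
        obtain W b where pw: "p = (W, b)" by (cases p)
        show "p \<in> (\<lambda>L. (WL L, brL L)) ` {L. dirac scale V0 V1 L}"
          using P3 p unfolding pw by (intro image_eqI[of _ _ "dirac_of scale W b"]) auto
      qed
    qed
  qed
  show ?thesis using P1 P2 P3 by blast
qed

end
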